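(* Let $H_{KR}=[h_1\cdots h_{51}]=[I_{10}\ M_{KR}]$ be the $10\times 51$ binary matrix, where $I_{10}$ is the identity matrix (so $h_i$ is the $i$-th unit vector for $i\le10$) and $h_{11},\dots,h_{51}$ are, in order, the columns of $M_{KR}$ given in hexadecimal as 1B6, 193, 1CC, 187, 1F6, F7, 16E, 140, 3C, 296, 22F, 303, 381, 365, 11D, 1A3, 274, 2F2, 254, 56, F, 41, 357, 208, 34, 329, 28D, 31D, 3D5, 129, 3D7, B7, 3EC, 2E2, 23C, AD, 34E, 155, 2E6, 371, D4 (each hexadecimal number written as a 10-bit binary string, most significant bit as the top entry; e.g. 1B6 $=(0,1,1,0,1,1,0,1,1,0)^T$). Let $\mathcal P_{KR}$ be the partition of the column indices into the 11 subsets $\{5,13,43\}$, $\{20,27\}$, $\{3,29,33,39,41,48,51\}$, $\{1,7,19,25,34,45\}$, $\{2,4,18\}$, $\{6,8,12,26,28,35,44\}$, $\{9,22,23,30\}$, $\{10,11,15,16,32,42\}$, $\{14,24,49,50\}$, $\{17,21,31,37,46,47\}$, $\{36,38,40\}$. Then (i) $\mathcal P_{KR}$ is a $2$-partition of $H_{KR}$: every nonzero vector of $\mathbb{F}_2^{10}$ is a column of $H_{KR}$ or the sum of two columns of $H_{KR}$ lying in distinct subsets of $\mathcal P_{KR}$; (ii) the code with parity-check matrix $H_{KR}$ has minimum distance $3$, and $h_5+h_{27}+h_{29}=0$, where $h_5,h_{27},h_{29}$ lie in three distinct subsets of $\mathcal P_{KR}$.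
   Context: For an $r\times n$ parity-check matrix $H$ of a binary code of covering radius $2$ and minimum distance $\ge3$, a $2$-partition is a partition of the column set of $H$ into nonempty subsets such that every vector of $\mathbb{F}_2^r$ is the sum of at most $2$ columns of $H$ lying in pairwise distinct subsets (the zero vector being the empty sum). *)

theory Defs
  imports Main
begin

text \<open>Binary vectors of \<open>F_2^r\<close> are modelled as functions \<open>nat \<Rightarrow> bool\<close>
  whose support lies in the coordinate set \<open>{1..r}\<close> (True = 1, False = 0).
  A binary \<open>r \<times> n\<close> matrix is given by its columns \<open>h i\<close>, \<open>i \<in> {1..n}\<close>,
  where \<open>h i j\<close> is the entry in row \<open>j\<close> of column \<open>i\<close>.\<close>

definition bvecs :: "nat \<Rightarrow> (nat \<Rightarrow> bool) set" where
  "bvecs r = {v. \<forall>j. v j \<longrightarrow> j \<in> {1..r}}"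

definition bzero :: "nat \<Rightarrow> bool" where
  "bzero = (\<lambda>_. False)"

definition colsum :: "(nat \<Rightarrow> nat \<Rightarrow> bool) \<Rightarrow> nat set \<Rightarrow> (nat \<Rightarrow> bool)" where
  "colsum h S = (\<lambda>j. odd (card {i \<in> S. h i j}))"

definition is_partition :: "nat set set \<Rightarrow> nat set \<Rightarrow> bool" where
  "is_partition P A \<longleftrightarrow> (\<forall>B\<in>P. B \<noteq> {}) \<and> \<Union>P = A \<and>
     (\<forall>B\<in>P. \<forall>C\<in>P. B \<noteq> C \<longrightarrow> B \<inter> C = {})"

definition same_block :: "nat set set \<Rightarrow> nat \<Rightarrow> nat \<Rightarrow> bool" where
  "same_block P a b \<longleftrightarrow> (\<exists>B\<in>P. a \<in> B \<and> b \<in> B)"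

definition two_partition :: "nat \<Rightarrow> nat \<Rightarrow> (nat \<Rightarrow> nat \<Rightarrow> bool) \<Rightarrow> nat set set \<Rightarrow> bool" where
  "two_partition r n h P \<longleftrightarrow> is_partition P {1..n} \<and>
     (\<forall>v \<in> bvecs r. \<exists>S. S \<subseteq> {1..n} \<and> card S \<le> 2 \<and> colsum h S = v \<and>
        (\<forall>a\<in>S. \<forall>b\<in>S. a \<noteq> b \<longrightarrow> \<not> same_block P a b))"

definition code :: "nat \<Rightarrow> (nat \<Rightarrow> nat \<Rightarrow> bool) \<Rightarrow> (nat \<Rightarrow> bool) set" where
  "code n h = {x \<in> bvecs n. colsum h {i. x i} = bzero}"

definition hamming_dist :: "(nat \<Rightarrow> bool) \<Rightarrow> (nat \<Rightarrow> bool) \<Rightarrow> nat" where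
  "hamming_dist x y = card {i. x i \<noteq> y i}"

definition min_distance :: "nat \<Rightarrow> (nat \<Rightarrow> nat \<Rightarrow> bool) \<Rightarrow> nat" where
  "min_distance n h = Min {hamming_dist x y | x y. x \<in> code n h \<and> y \<in> code n h \<and> x \<noteq> y}"

definition M_KR :: "nat list" where
  "M_KR = [0x1B6, 0x193, 0x1CC, 0x187, 0x1F6, 0xF7, 0x16E, 0x140, 0x3C, 0x296,
           0x22F, 0x303, 0x381, 0x365, 0x11D, 0x1A3, 0x274, 0x2F2, 0x254, 0x56,
           0xF, 0x41, 0x357, 0x208, 0x34, 0x329, 0x28D, 0x31D, 0x3D5, 0x129,
           0x3D7, 0xB7, 0x3EC, 0x2E2, 0x23C, 0xAD, 0x34E, 0x155, 0x2E6, 0x371, 0xD4]"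

text \<open>\<open>H_KR = [I_10 M_KR]\<close>; row \<open>j \<in> {1..10}\<close>, row 1 is the most significant bit.\<close>
definition H_KR :: "nat \<Rightarrow> nat \<Rightarrow> bool" where
  "H_KR i j = (j \<in> {1..10} \<and>
     (if i \<le> 10 then i = j else bit (M_KR ! (i - 11)) (10 - j)))"

definition P_KR :: "nat set set" where
  "P_KR = {{5,13,43}, {20,27}, {3,29,33,39,41,48,51}, {1,7,19,25,34,45}, {2,4,18},
           {6,8,12,26,28,35,44}, {9,22,23,30}, {10,11,15,16,32,42}, {14,24,49,50},
           {17,21,31,37,46,47}, {36,38,40}}"

end

theory Submission
  imports Defs
begin

definition colf :: "nat \<Rightarrow> nat" where "colf a = (if a < 26 then (if a < 13 then (if a < 6 then (if a < 3 then (if a < 1 then 0 else (if a < 2 then 512 else 256)) else (if a < 4 then 128 else (if a < 5 then 64 else 32))) else (if a < 9 then (if a < 7 then 16 else (if a < 8 then 8 else 4)) else (if a < 11 then (if a < 10 then 2 else 1) else (if a < 12 then 438 else 403)))) else (if a < 19 then (if a < 16 then (if a < 14 then 460 else (if a < 15 then 391 else 502)) else (if a < 17 then 247 else (if a < 18 then 366 else 320))) else (if a < 22 then (if a < 20 then 60 else (if a < 21 then 662 else 559)) else (if a < 24 then (if a < 23 then 771 else 897) else (if a < 25 then 869 else 285))))) else (if a < 39 then (if a < 32 then (if a < 29 then (if a < 27 then 419 else (if a < 28 then 628 else 754)) else (if a < 30 then 596 else (if a < 31 then 86 else 15))) else (if a < 35 then (if a < 33 then 65 else (if a < 34 then 855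 else 520)) else (if a < 37 then (if a < 36 then 52 else 809) else (if a < 38 then 653 else 797)))) else (if a < 45 then (if a < 42 then (if a < 40 then 981 else (if a < 41 then 297 else 983)) else (if a < 43 then 183 else (if a < 44 then 1004 else 738))) else (if a < 48 then (if a < 46 then 572 else (if a < 47 then 173 else 846)) else (if a < 50 then (if a < 49 then 341 else 742) else (if a < 51 then 881 else 212))))))"
definition blkf :: "nat \<Rightarrow> nat" where "blkf a = (if a < 26 then (if a < 13 then (if a < 6 then (if a < 3 then (if a < 1 then 0 else (if a < 2 then 4 else 5)) else (if a < 4 then 3 else (if a < 5 then 5 else 1))) else (if a < 9 then (if a < 7 then 6 else (if a < 8 then 4 else 6)) else (if a < 11 then (if a < 10 then 7 else 8) else (if a < 12 then 8 else 6)))) else (if a < 19 then (if a < 16 then (if a < 14 then 1 else (if a < 15 then 9 else 8)) else (if a < 17 then 8 else (if a < 18 then 10 else 5))) else (if a < 22 then (if a < 20 then 4 else (if a < 21 then 2 else 10)) else (if a < 24 then (if a < 23 then 7 else 7) else (if a < 25 then 9 else 4))))) else (if a < 39 then (if a < 32 then (if a < 29 then (if a < 27 then 6 else (if a < 28 then 2 else 6)) else (if a < 30 then 3 else (if a < 31 then 7 else 10))) else (if a < 35 then (if a < 33 then 8 else (if a < 34 then 3 else 4)) else (if a < 37 then (if a < 36 then 6 else 11) else (if a < 38 then 10 else 11)))) else (if a < 45 then (if a < 42 then (if a < 40 then 3 else (if a < 41 then 11 else 3)) else (if a < 43 then 8 else (if a < 44 then 1 else 6))) else (if a < 48 then (if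 a < 46 then 4 else (if a < 47 then 10 else 10)) else (if a < 50 then (if a < 49 then 3 else 9) else (if a < 51 then 9 else 3))))))"
definition WL0 :: "(nat \<times> nat) list" where "WL0 = [(0,0), (10,0), (9,0), (9,10), (8,0), (8,10), (8,9), (7,31), (7,0), (7,10), (7,9), (8,31), (7,8), (9,31), (10,31), (31,0), (6,0), (6,10), (6,9), (21,45), (5,35), (11,26), (4,30), (30,32), (6,7), (33,47), (42,46), (20,37), (5,19), (2,25), (22,38), (6,31), (5,0), (5,10), (5,9), (16,51), (5,8), (11,12), (33,50), (21,34), (5,7), (2,40), (22,36), (24,47), (6,19), (3,46), (17,18), (1,21), (5,6), (11,14), (24,33), (19,31), (35,0), (10,35), (9,35), (3,42), (8,19), (39,43), (13,15), (17,48), (19,0), (10,19), (9,19), (47,50)]"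
definition WL1 :: "(nat \<times> nat) list" where "WL1 = [(4,0), (32,0), (4,9), (9,32), (4,8), (8,32), (6,30), (17,40), (4,7), (7,32), (33,38), (13,14), (24,36), (22,47), (31,32), (4,31), (4,6), (6,32), (8,30), (38,47), (1,29), (2,48), (30,0), (10,30), (36,50), (30,31), (16,46), (21,27), (29,34), (18,25), (7,30), (12,13), (4,5), (5,32), (30,35), (42,51), (20,28), (12,15), (22,24), (36,47), (29,45), (18,40), (19,30), (37,49), (38,50), (23,43), (2,17), (13,26), (20,49), (14,15), (22,50), (17,25), (1,27), (32,35), (5,30), (3,16), (24,38), (46,51), (11,13), (21,29), (4,19), (19,32), (33,36), (28,37)]"
definition WL2 :: "(nat \<times> nat) list" where "WL2 = [(3,0), (3,10), (3,9), (35,42), (3,8), (34,37), (27,28), (2,14), (3,7), (24,43), (26,40), (19,42), (13,18), (1,37), (12,25), (3,31), (3,6), (19,46), (27,49), (2,12), (4,51), (32,51), (1,20), (5,42), (15,17), (13,48), (14,25), (39,47), (23,38), (43,50), (20,34), (11,40), (3,5), (16,30), (13,17), (2,26), (39,50), (7,46), (28,29), (6,42), (23,36), (8,46), (20,45), (11,25), (10,46), (46,0), (14,40), (9,46), (24,39), (37,45), (24,41), (8,42), (3,35), (9,42), (2,11), (42,0), (31,42), (20,21), (12,40), (33,43), (3,19), (6,46), (25,26), (7,42)]"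
definition WL3 :: "(nat \<times> nat) list" where "WL3 = [(3,4), (3,32), (20,29), (16,35), (6,51), (36,43), (12,48), (14,18), (38,39), (21,49), (38,41), (16,19), (2,13), (17,26), (28,45), (23,47), (8,51), (13,25), (14,48), (12,18), (51,0), (10,51), (3,30), (5,16), (11,17), (29,37), (45,49), (31,51), (7,51), (21,28), (44,45), (15,40), (35,51), (30,42), (1,44), (11,48), (23,24), (13,40), (1,49), (6,16), (19,51), (14,17), (34,44), (15,25), (32,46), (4,46), (34,49), (22,43), (23,50), (38,43), (1,28), (8,16), (5,51), (9,16), (2,15), (16,0), (16,31), (27,37), (28,34), (30,46), (36,39), (12,17), (36,41), (7,16)]"
definition WL4 :: "(nat \<times> nat) list" where "WL4 = [(2,0), (2,10), (2,9), (1,22), (2,8), (27,50), (21,36), (3,14), (2,7), (5,40), (43,49), (22,34), (23,37), (6,25), (26,46), (2,31), (2,6), (24,27), (25,31), (3,12), (26,42), (4,48), (18,30), (20,23), (13,51), (8,25), (29,47), (11,46), (10,25), (25,0), (28,43), (9,25), (2,5), (7,40), (15,51), (3,26), (12,42), (28,41), (31,40), (28,39), (10,40), (40,0), (14,46), (9,40), (21,22), (8,40), (4,17), (17,32), (14,42), (24,29), (21,38), (39,49), (2,35), (41,44), (3,11), (39,44), (17,30), (6,40), (27,47), (13,16), (2,19), (5,25), (12,46), (22,45)]"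
definition WL5 :: "(nat \<times> nat) list" where "WL5 = [(18,0), (2,32), (9,18), (20,39), (8,18), (6,48), (34,47), (12,51), (7,18), (29,38), (21,24), (25,30), (3,13), (45,50), (1,47), (18,31), (6,18), (8,48), (17,19), (14,51), (10,48), (48,0), (2,30), (1,33), (37,39), (24,45), (17,35), (15,46), (25,32), (4,25), (21,50), (33,34), (5,18), (13,46), (11,51), (23,44), (12,16), (1,24), (7,17), (23,49), (32,40), (4,40), (8,17), (33,45), (9,17), (24,34), (17,0), (10,17), (14,16), (1,50), (45,47), (23,28), (18,35), (5,48), (3,15), (22,27), (21,33), (34,50), (20,43), (13,42), (18,19), (29,36), (6,17), (30,40)]"
definition WL6 :: "(nat \<times> nat) list" where "WL6 = [(2,3), (1,23), (11,35), (5,26), (40,46), (9,14), (10,14), (14,0), (14,31), (23,34), (11,19), (20,38), (4,13), (13,32), (22,37), (7,14), (37,38), (9,12), (10,12), (12,0), (18,51), (20,22), (5,11), (6,14), (27,43), (16,17), (13,30), (7,12), (12,31), (3,25), (40,42), (19,26), (15,30), (9,26), (10,26), (26,0), (36,37), (28,33), (6,11), (5,14), (47,49), (3,40), (25,42), (7,26), (26,31), (2,46), (21,23), (12,19), (25,46), (33,49), (8,11), (5,12), (9,11), (33,44), (11,0), (2,42), (29,43), (11,31), (17,51), (14,19), (28,47), (23,45), (7,11), (20,36)]"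
definition WL7 :: "(nat \<times> nat) list" where "WL7 = [(3,18), (20,33), (15,35), (13,31), (7,13), (12,30), (14,32), (4,14), (8,13), (25,51), (15,19), (36,44), (13,0), (10,13), (9,13), (36,49), (43,45), (14,30), (12,32), (4,12), (2,51), (1,39), (5,15), (1,41), (20,47), (17,42), (33,37), (28,36), (6,13), (34,39), (16,40), (34,41), (11,30), (22,44), (26,32), (4,26), (34,43), (22,49), (6,15), (20,50), (24,37), (39,45), (16,25), (41,45), (1,43), (18,46), (3,17), (28,38), (13,19), (22,28), (8,15), (20,24), (9,15), (23,27), (15,0), (2,16), (13,35), (15,31), (21,39), (38,49), (37,50), (40,51), (7,15), (38,44)]"
definition WL8 :: "(nat \<times> nat) list" where "WL8 = [(1,0), (1,10), (1,9), (2,22), (1,8), (16,28), (14,23), (31,34), (34,0), (10,34), (9,34), (17,24), (8,34), (3,37), (18,47), (1,31), (1,6), (16,49), (12,23), (19,21), (4,29), (16,44), (3,20), (18,33), (6,34), (13,39), (15,43), (13,41), (5,45), (2,38), (22,25), (17,50), (1,5), (15,41), (23,26), (15,39), (48,50), (18,24), (28,51), (7,21), (5,34), (2,36), (22,40), (8,21), (6,45), (9,21), (10,21), (21,0), (24,48), (18,50), (49,51), (31,45), (1,35), (27,32), (44,51), (11,23), (8,45), (17,33), (37,42), (20,46), (45,0), (10,45), (9,45), (6,21)]"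
definition WL9 :: "(nat \<times> nat) list" where "WL9 = [(1,4), (1,32), (20,51), (18,22), (6,29), (28,42), (12,39), (17,36), (4,34), (32,34), (25,33), (46,49), (24,40), (13,23), (2,47), (26,43), (8,29), (42,49), (14,39), (25,47), (29,0), (10,29), (1,30), (2,33), (40,50), (37,51), (11,43), (29,31), (7,29), (18,38), (30,34), (28,46), (29,35), (11,41), (3,44), (11,39), (6,27), (2,24), (3,49), (40,47), (19,29), (18,36), (30,45), (14,43), (25,50), (17,22), (21,32), (4,21), (8,27), (2,50), (3,28), (17,38), (27,0), (10,27), (9,27), (15,23), (24,25), (21,30), (16,37), (27,31), (4,45), (32,45), (33,40), (12,43)]"
definition WL10 :: "(nat \<times> nat) list" where "WL10 = [(1,3), (2,23), (13,47), (16,27), (14,22), (7,37), (6,20), (15,50), (3,34), (8,37), (26,36), (42,45), (10,37), (37,0), (12,38), (9,37), (12,22), (45,46), (8,20), (15,24), (9,20), (18,39), (20,0), (10,20), (21,42), (20,31), (14,38), (13,33), (23,25), (6,37), (7,20), (11,36), (22,26), (15,33), (4,44), (16,29), (28,30), (34,46), (4,49), (32,49), (23,40), (13,24), (19,20), (11,38), (18,43), (1,46), (14,36), (3,21), (30,49), (19,37), (4,28), (28,32), (30,44), (11,22), (5,20), (1,42), (15,47), (17,41), (12,36), (17,39), (3,45), (13,50), (26,38), (34,42)]"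
definition WL11 :: "(nat \<times> nat) list" where "WL11 = [(20,30), (18,23), (5,44), (27,42), (12,33), (40,43), (5,49), (11,50), (25,39), (14,47), (25,41), (16,45), (32,37), (4,37), (19,28), (13,22), (14,33), (13,38), (5,28), (11,24), (1,51), (2,39), (4,20), (2,41), (16,21), (27,46), (19,49), (30,37), (34,51), (12,47), (19,44), (15,36), (9,44), (11,33), (44,0), (10,44), (9,49), (13,36), (49,0), (10,49), (45,51), (31,49), (7,44), (15,38), (2,43), (26,47), (7,49), (17,23), (9,28), (25,43), (28,0), (10,28), (3,27), (15,22), (6,49), (1,16), (11,47), (29,46), (7,28), (21,51), (39,40), (28,31), (40,41), (16,34)]"
definition WL12 :: "(nat \<times> nat) list" where "WL12 = [(1,2), (3,23), (10,22), (22,0), (15,28), (12,20), (21,40), (8,22), (2,34), (5,36), (14,37), (7,22), (22,31), (6,38), (4,47), (32,47), (15,49), (14,20), (31,38), (6,22), (15,44), (7,38), (32,33), (4,33), (30,47), (8,38), (17,27), (16,43), (10,38), (38,0), (12,37), (9,38), (11,20), (7,36), (16,39), (5,22), (24,32), (4,24), (31,36), (30,50), (10,36), (36,0), (13,49), (9,36), (23,46), (8,36), (13,44), (2,21), (32,50), (4,50), (21,25), (24,30), (18,27), (20,26), (23,42), (22,35), (43,51), (6,36), (17,29), (11,37), (2,45), (5,38), (13,28), (19,22)]"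
definition WL13 :: "(nat \<times> nat) list" where "WL13 = [(1,18), (13,37), (22,32), (4,22), (11,28), (5,24), (7,47), (6,33), (18,34), (25,29), (8,47), (30,38), (9,47), (19,50), (47,0), (10,47), (11,49), (5,50), (17,45), (8,33), (2,29), (1,48), (10,33), (33,0), (31,33), (19,24), (13,20), (42,43), (32,38), (4,38), (6,47), (7,33), (15,20), (6,50), (39,42), (33,35), (10,24), (24,0), (17,34), (9,24), (32,36), (4,36), (24,31), (19,33), (3,43), (7,24), (1,17), (18,21), (10,50), (50,0), (19,47), (9,50), (2,27), (6,24), (16,23), (5,33), (39,46), (7,50), (21,48), (15,37), (18,45), (29,40), (31,50), (30,36)]"
definition WL14 :: "(nat \<times> nat) list" where "WL14 = [(10,23), (23,0), (15,27), (3,22), (36,46), (8,23), (16,50), (1,14), (17,49), (7,23), (11,45), (20,25), (17,44), (2,37), (23,31), (14,34), (25,37), (6,23), (16,24), (1,12), (32,39), (4,39), (2,20), (4,41), (13,29), (11,21), (47,51), (12,34), (17,28), (3,38), (36,42), (26,45), (16,33), (5,23), (15,29), (1,26), (37,40), (50,51), (18,49), (28,48), (14,21), (3,36), (38,42), (26,34), (4,43), (32,43), (22,46), (12,45), (38,46), (24,51), (18,28), (48,49), (22,42), (23,35), (1,11), (44,48), (13,27), (16,47), (30,43), (14,45), (12,21), (19,23), (11,34), (20,40)]"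
definition WL15 :: "(nat \<times> nat) list" where "WL15 = [(23,32), (4,23), (11,27), (20,48), (13,34), (6,39), (42,50), (6,41), (24,46), (38,51), (15,45), (40,44), (1,13), (18,37), (3,47), (40,49), (19,43), (8,39), (24,42), (8,41), (10,39), (39,0), (10,41), (41,0), (31,41), (15,21), (31,39), (28,40), (46,50), (7,39), (16,36), (7,41), (33,42), (35,39), (2,44), (13,21), (7,43), (3,24), (2,49), (12,27), (8,43), (19,39), (16,38), (19,41), (43,0), (10,43), (9,43), (25,28), (13,45), (3,50), (2,28), (14,27), (16,22), (5,39), (1,15), (5,41), (17,20), (42,47), (33,46), (25,49), (6,43), (36,51), (15,34), (25,44)]"
definition WL :: "(nat \<times> nat) list" where "WL = WL0 @ WL1 @ WL2 @ WL3 @ WL4 @ WL5 @ WL6 @ WL7 @ WL8 @ WL9 @ WL10 @ WL11 @ WL12 @ WL13 @ WL14 @ WL15"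
definition L51 :: "nat list" where "L51 = [1, 2, 3, 4, 5, 6, 7, 8, 9, 10, 11, 12, 13, 14, 15, 16, 17, 18, 19, 20, 21, 22, 23, 24, 25, 26, 27, 28, 29, 30, 31, 32, 33, 34, 35, 36, 37, 38, 39, 40, 41, 42, 43, 44, 45, 46, 47, 48, 49, 50, 51]"
lemma L51_upt: "[1..<52] = L51" unfolding L51_def by (simp add: upt_rec)
lemma L51_set: "{1..51} = set L51" unfolding L51_upt[symmetric] set_upt by auto
definition vec :: "nat \<Rightarrow> nat \<Rightarrow> bool" where
  "vec m = (\<lambda>j. j \<in> {1..10} \<and> bit m (10 - j))"
lemma cols_ok: "distinct (map colf L51) \<and> list_all (\<lambda>x. 0 < x \<and> x < 1024) (map colf L51)"
  by (simp add: L51_def colf_def)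
lemma cols_eq: "list_all (\<lambda>a. colf a = (if a \<le> 10 then 2^(10-a) else M_KR ! (a - 11))) L51"
  by (simp add: L51_def colf_def M_KR_def)
lemma part: "is_partition P_KR {1..51}"
  unfolding is_partition_def P_KR_def
  apply (intro conjI)
    apply simp
   apply (unfold L51_set L51_def) apply auto[1]
  apply simp
  done
lemma blk0: "\<forall>B\<in>P_KR. \<exists>k. \<forall>x\<in>B. blkf x = k"
  unfolding P_KR_def by (simp add: blkf_def)

lemma blk: "same_block P_KR a b \<Longrightarrow> blkf a = blkf b"
  using blk0 unfolding same_block_def by metis

definition fW :: "nat \<times> nat \<Rightarrow> nat" where
 "fW p = (if fst p = 0 then 0 else if snd p = 0 then colf (fst p) else xor (colf (fst p)) (colf (snd p)))"
definition vW :: "nat \<times> nat \<Rightarrow> bool" where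
 "vW p = ((fst p = 0 \<and> snd p = 0) \<or> (1 \<le> fst p \<and> fst p \<le> 51 \<and> snd p = 0) \<or>
   (1 \<le> fst p \<and> fst p \<le> 51 \<and> 1 \<le> snd p \<and> snd p \<le> 51 \<and> fst p \<noteq> snd p \<and> blkf (fst p) \<noteq> blkf (snd p)))"
fun chkf :: "nat \<Rightarrow> (nat \<times> nat) list \<Rightarrow> bool" where
  "chkf i [] = True"
| "chkf i (p # ps) = (fW p = i \<and> vW p \<and> chkf (i + 1) ps)"

lemma chkf_nth: "chkf i ps \<Longrightarrow> k < length ps \<Longrightarrow> fW (ps ! k) = i + k \<and> vW (ps ! k)"
proof (induction ps arbitrary: i k)
  case Nil then show ?case by simp
next
  case (Cons p ps)
  show ?case
  proof (cases k)
    case 0 then show ?thesis using Cons.prems by simp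
  next
    case (Suc k') then show ?thesis using Cons.prems Cons.IH[of "i+1" k'] by simp
  qed
qed

lemma chkf_append: "chkf i (xs @ ys) = (chkf i xs \<and> chkf (i + length xs) ys)"
  by (induction xs arbitrary: i) auto

lemma chk0: "chkf 0 WL0 \<and> length WL0 = 64"
  by (simp add: WL0_def fW_def vW_def colf_def blkf_def)
lemma chk1: "chkf 64 WL1 \<and> length WL1 = 64"
  by (simp add: WL1_def fW_def vW_def colf_def blkf_def)
lemma chk2: "chkf 128 WL2 \<and> length WL2 = 64"
  by (simp add: WL2_def fW_def vW_def colf_def blkf_def)
lemma chk3: "chkf 192 WL3 \<and> length WL3 = 64"
  by (simp add: WL3_def fW_def vW_def colf_def blkf_def)
lemma chk4: "chkf 256 WL4 \<and> length WL4 = 64"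
  by (simp add: WL4_def fW_def vW_def colf_def blkf_def)
lemma chk5: "chkf 320 WL5 \<and> length WL5 = 64"
  by (simp add: WL5_def fW_def vW_def colf_def blkf_def)
lemma chk6: "chkf 384 WL6 \<and> length WL6 = 64"
  by (simp add: WL6_def fW_def vW_def colf_def blkf_def)
lemma chk7: "chkf 448 WL7 \<and> length WL7 = 64"
  by (simp add: WL7_def fW_def vW_def colf_def blkf_def)
lemma chk8: "chkf 512 WL8 \<and> length WL8 = 64"
  by (simp add: WL8_def fW_def vW_def colf_def blkf_def)
lemma chk9: "chkf 576 WL9 \<and> length WL9 = 64"
  by (simp add: WL9_def fW_def vW_def colf_def blkf_def)
lemma chk10: "chkf 640 WL10 \<and> length WL10 = 64"
  by (simp add: WL10_def fW_def vW_def colf_def blkf_def)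
lemma chk11: "chkf 704 WL11 \<and> length WL11 = 64"
  by (simp add: WL11_def fW_def vW_def colf_def blkf_def)
lemma chk12: "chkf 768 WL12 \<and> length WL12 = 64"
  by (simp add: WL12_def fW_def vW_def colf_def blkf_def)
lemma chk13: "chkf 832 WL13 \<and> length WL13 = 64"
  by (simp add: WL13_def fW_def vW_def colf_def blkf_def)
lemma chk14: "chkf 896 WL14 \<and> length WL14 = 64"
  by (simp add: WL14_def fW_def vW_def colf_def blkf_def)
lemma chk15: "chkf 960 WL15 \<and> length WL15 = 64"
  by (simp add: WL15_def fW_def vW_def colf_def blkf_def)

lemma chk_all: "chkf 0 WL \<and> length WL = 1024"
  unfolding WL_def chkf_append length_append using chk0 chk1 chk2 chk3 chk4 chk5 chk6 chk7 chk8 chk9 chk10 chk11 chk12 chk13 chk14 chk15 by simp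

lemma colf_in: "a \<in> {1..51} \<Longrightarrow> colf a = (if a \<le> 10 then 2^(10-a) else M_KR ! (a - 11))"
  using cols_eq unfolding L51_set list_all_iff by blast

lemma colf_props: "a \<in> {1..51} \<Longrightarrow> 0 < colf a \<and> colf a < 1024"
  using cols_ok unfolding L51_set list_all_iff by auto

lemma colf_inj: "a \<in> {1..51} \<Longrightarrow> b \<in> {1..51} \<Longrightarrow> colf a = colf b \<Longrightarrow> a = b"
  using cols_ok unfolding L51_set distinct_map inj_on_def by blast

lemma H_vec: "a \<in> {1..51} \<Longrightarrow> H_KR a = vec (colf a)"
proof (rule ext)
  fix j assume a: "a \<in> {1..51}"
  show "H_KR a j = vec (colf a) j"
  proof (cases "a \<le> 10")
    case True
    then have "colf a = 2 ^ (10 - a)" using colf_in[OF a] by simp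
    moreover have "j \<in> {1..10} \<Longrightarrow> (10 - a = 10 - j) = (a = j)" using True a by auto
    ultimately show ?thesis using True unfolding H_KR_def vec_def by (auto simp: bit_exp_iff)
  next
    case False
    then show ?thesis using colf_in[OF a] unfolding H_KR_def vec_def by simp
  qed
qed

lemma vec_xor: "vec (xor x y) = (\<lambda>j. vec x j \<noteq> vec y j)"
  unfolding vec_def by (auto simp: bit_xor_iff)

lemma vec_0: "vec 0 = bzero"
  unfolding vec_def bzero_def by simp

lemma vec_inj: assumes "vec x = vec y" "x < 1024" "y < 1024" shows "x = y"
proof -
  have tx: "take_bit 10 x = x" using assms(2) by (simp add: take_bit_nat_eq_self_iff)
  have ty: "take_bit 10 y = y" using assms(3) by (simp add: take_bit_nat_eq_self_iff)
  have "bit x k = bit y k" for k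
  proof (cases "k < 10")
    case True
    then have "vec x (10 - k) = vec y (10 - k)" using assms(1) by simp
    then show ?thesis using True unfolding vec_def by auto
  next
    case False
    then show ?thesis by (metis tx ty bit_take_bit_iff)
  qed
  then show ?thesis by (simp add: bit_eq_iff)
qed

lemma bit_or_exp: "bit (or (n::nat) (2 ^ x)) k = (bit n k \<or> k = x)"
  by (simp add: bit_or_iff bit_exp_iff)

lemma bits_exist: "finite K \<Longrightarrow> \<exists>n::nat. \<forall>k. bit n k = (k \<in> K)"
proof (induction K rule: finite_induct)
  case empty then show ?case by (intro exI[of _ 0]) simp
next
  case (insert x F)
  from insert.IH obtain n :: nat where n: "\<forall>k. bit n k = (k \<in> F)" by blast
  have "bit (or n (2 ^ x)) k = (k \<in> insert x F)" for k
    using n bit_or_exp[of n x k] by auto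
  then show ?case by blast
qed

lemma vec_surj: assumes "v \<in> bvecs 10" shows "\<exists>m<1024. v = vec m"
proof -
  let ?K = "{k. k < 10 \<and> v (10 - k)}"
  obtain n :: nat where n: "\<forall>k. bit n k = (k \<in> ?K)" using bits_exist[of ?K] by auto
  let ?m = "take_bit 10 n"
  have "?m < 2 ^ 10" by (rule take_bit_nat_less_exp)
  moreover have "v = vec ?m"
  proof (rule ext)
    fix j
    show "v j = vec ?m j"
    proof (cases "j \<in> {1..10}")
      case True
      then have "10 - (10 - j) = j" by auto
      then show ?thesis using True n unfolding vec_def by (auto simp: bit_take_bit_iff)
    next
      case False then show ?thesis using assms unfolding bvecs_def vec_def by auto
    qed
  qed
  ultimately show ?thesis by auto
qed

lemma colsum0: "colsum h {} = bzero" unfolding colsum_def bzero_def by simp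

lemma colsum1: "colsum h {a} = h a"
proof (rule ext)
  fix j
  have "{i \<in> {a}. h i j} = (if h a j then {a} else {})" by auto
  then show "colsum h {a} j = h a j" unfolding colsum_def by simp
qed

lemma colsum2: "a \<noteq> b \<Longrightarrow> colsum h {a, b} = (\<lambda>j. h a j \<noteq> h b j)"
proof (rule ext)
  fix j assume ab: "a \<noteq> b"
  have "{i \<in> {a, b}. h i j} = (if h a j then {a} else {}) \<union> (if h b j then {b} else {})" by auto
  then show "colsum h {a, b} j = (h a j \<noteq> h b j)" unfolding colsum_def using ab by auto
qed

lemma colsum3: "a \<noteq> b \<Longrightarrow> a \<noteq> c \<Longrightarrow> b \<noteq> c \<Longrightarrow>
   colsum h {a, b, c} = (\<lambda>j. (h a j \<noteq> h b j) \<noteq> h c j)"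
proof (rule ext)
  fix j assume d: "a \<noteq> b" "a \<noteq> c" "b \<noteq> c"
  have "{i \<in> {a, b, c}. h i j} = (if h a j then {a} else {}) \<union> (if h b j then {b} else {}) \<union> (if h c j then {c} else {})" by auto
  then show "colsum h {a, b, c} j = ((h a j \<noteq> h b j) \<noteq> h c j)" unfolding colsum_def using d
    by (simp only:)  (cases "h a j"; cases "h b j"; cases "h c j"; simp add: card_insert_if)
qed

lemma two_part: "two_partition 10 51 H_KR P_KR"
  unfolding two_partition_def
proof (intro conjI part ballI)
  fix v assume v: "v \<in> bvecs 10"
  obtain m where m: "m < 1024" "v = vec m" using vec_surj[OF v] by blast
  define p where "p = WL ! m"
  have fp: "fW p = m" and vp: "vW p" using chkf_nth[of 0 WL m] chk_all m(1) unfolding p_def by auto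
  show "\<exists>S\<subseteq>{1..51}. card S \<le> 2 \<and> colsum H_KR S = v \<and> (\<forall>a\<in>S. \<forall>b\<in>S. a \<noteq> b \<longrightarrow> \<not> same_block P_KR a b)"
  proof (cases "fst p = 0")
    case True
    then have "m = 0" using fp unfolding fW_def by simp
    then show ?thesis using m colsum0 vec_0 by (intro exI[of _ "{}"]) auto
  next
    case False
    then have a: "fst p \<in> {1..51}" using vp unfolding vW_def by auto
    show ?thesis
    proof (cases "snd p = 0")
      case True
      then have "colf (fst p) = m" using fp False unfolding fW_def by simp
      then show ?thesis using m a colsum1 H_vec[OF a] by (intro exI[of _ "{fst p}"]) auto
    next
      case F2: False
      then have b: "snd p \<in> {1..51}" and ab: "fst p \<noteq> snd p" and bl: "blkf (fst p) \<noteq> blkf (snd p)"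
        using vp False unfolding vW_def by auto
      have x: "xor (colf (fst p)) (colf (snd p)) = m" using fp False F2 unfolding fW_def by simp
      have "colsum H_KR {fst p, snd p} = (\<lambda>j. vec (colf (fst p)) j \<noteq> vec (colf (snd p)) j)"
        using colsum2[OF ab, of H_KR] H_vec[OF a] H_vec[OF b] by simp
      also have "\<dots> = vec (xor (colf (fst p)) (colf (snd p)))" by (rule vec_xor[symmetric])
      also have "\<dots> = v" using x m by simp
      finally have cs: "colsum H_KR {fst p, snd p} = v" .
      have "\<not> same_block P_KR (fst p) (snd p)" "\<not> same_block P_KR (snd p) (fst p)"
        using blk bl by metis+
      then show ?thesis using a b cs ab by (intro exI[of _ "{fst p, snd p}"]) auto
    qed
  qed
qed

lemma sum3: "colsum H_KR {5, 27, 29} = bzero"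
proof -
  have "colsum H_KR {5, 27, 29} = vec (xor (xor (colf 5) (colf 27)) (colf 29))"
    using colsum3[of 5 27 29 H_KR] H_vec[of 5] H_vec[of 27] H_vec[of 29] vec_xor by simp
  also have "xor (xor (colf 5) (colf 27)) (colf 29) = 0" by (simp add: colf_def)
  finally show ?thesis using vec_0 by simp
qed

lemma even_symdiff: assumes "finite A" "finite B" "even (card A)" "even (card B)"
  shows "even (card ((A - B) \<union> (B - A)))"
proof -
  have "card (A \<union> B) + card (A \<inter> B) = card A + card B" using assms card_Un_Int by metis
  moreover have "A \<union> B = ((A - B) \<union> (B - A)) \<union> (A \<inter> B)" by auto
  moreover have "card (((A - B) \<union> (B - A)) \<union> (A \<inter> B)) = card ((A - B) \<union> (B - A)) + card (A \<inter> B)"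
    using assms by (intro card_Un_disjoint) auto
  ultimately show ?thesis using assms by (metis add_diff_cancel_right' even_add even_diff_nat mult_2 dvd_triv_left)
qed

lemma code_dist: assumes "x \<in> code 51 H_KR" "y \<in> code 51 H_KR" "x \<noteq> y"
  shows "3 \<le> hamming_dist x y"
proof (rule ccontr)
  assume "\<not> 3 \<le> hamming_dist x y"
  define D where "D = {i. x i \<noteq> y i}"
  define X where "X = {i. x i}"
  define Y where "Y = {i. y i}"
  have xb: "x \<in> bvecs 51" and yb: "y \<in> bvecs 51" and cx: "colsum H_KR X = bzero" and cy: "colsum H_KR Y = bzero"
    using assms unfolding code_def X_def Y_def by auto
  have XY: "X \<subseteq> {1..51}" "Y \<subseteq> {1..51}" using xb yb unfolding bvecs_def X_def Y_def by auto
  have DS: "D \<subseteq> {1..51}" using xb yb unfolding bvecs_def D_def by auto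
  have fD: "finite D" using DS finite_subset by blast
  have "D \<noteq> {}" using assms(3) unfolding D_def by auto
  then have c0: "card D \<noteq> 0" using fD by simp
  have cD: "card D \<le> 2" using \<open>\<not> 3 \<le> hamming_dist x y\<close> unfolding hamming_dist_def D_def by simp
  have cs: "colsum H_KR D = bzero"
  proof (rule ext)
    fix j
    have e: "{i \<in> D. H_KR i j} = ({i \<in> X. H_KR i j} - {i \<in> Y. H_KR i j}) \<union> ({i \<in> Y. H_KR i j} - {i \<in> X. H_KR i j})"
      unfolding D_def X_def Y_def by auto
    have f1: "finite {i \<in> X. H_KR i j}" "finite {i \<in> Y. H_KR i j}"
      using XY by (auto intro: finite_subset)
    have "even (card {i \<in> X. H_KR i j})" "even (card {i \<in> Y. H_KR i j})"
      using fun_cong[OF cx, of j] fun_cong[OF cy, of j] unfolding colsum_def bzero_def by auto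
    then have "even (card {i \<in> D. H_KR i j})" unfolding e using f1 even_symdiff by blast
    then show "colsum H_KR D j = bzero j" unfolding colsum_def bzero_def by simp
  qed
  show False
  proof (cases "card D = 1")
    case True
    then obtain a where aD: "D = {a}" by (metis card_1_singletonE)
    then have a: "a \<in> {1..51}" using DS by auto
    have "vec (colf a) = vec 0" using cs colsum1[of H_KR a] H_vec[OF a] vec_0 aD by simp
    then have "colf a = 0" using vec_inj colf_props[OF a] by simp
    then show False using colf_props[OF a] by simp
  next
    case False
    then have "card D = 2" using c0 cD by simp
    then obtain a b where ab: "D = {a, b}" "a \<noteq> b" by (metis card_2_iff)
    then have a: "a \<in> {1..51}" and b: "b \<in> {1..51}" using DS by auto
    have "H_KR a = H_KR b"
    proof (rule ext)
      fix j show "H_KR a j = H_KR b j"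
        using fun_cong[OF cs, of j] colsum2[OF ab(2), of H_KR] ab(1) unfolding bzero_def by simp
    qed
    then have "vec (colf a) = vec (colf b)" using H_vec[OF a] H_vec[OF b] by simp
    then have "colf a = colf b" using vec_inj colf_props[OF a] colf_props[OF b] by simp
    then show False using colf_inj[OF a b] ab(2) by simp
  qed
qed

lemma min_dist: "min_distance 51 H_KR = 3"
  unfolding min_distance_def
proof (rule Min_eqI)
  let ?S = "{hamming_dist x y |x y. x \<in> code 51 H_KR \<and> y \<in> code 51 H_KR \<and> x \<noteq> y}"
  have "?S \<subseteq> {..51}"
  proof
    fix d assume "d \<in> ?S"
    then obtain x y where d: "d = hamming_dist x y" "x \<in> code 51 H_KR" "y \<in> code 51 H_KR" by blast
    then have "{i. x i \<noteq> y i} \<subseteq> {1..51}" unfolding code_def bvecs_def by auto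
    then have "card {i. x i \<noteq> y i} \<le> card {1..51::nat}" by (intro card_mono) auto
    then show "d \<in> {..51}" using d unfolding hamming_dist_def by simp
  qed
  then show "finite ?S" using finite_subset by blast
  show "\<And>d. d \<in> ?S \<Longrightarrow> 3 \<le> d" using code_dist by blast
  define x where "x = (\<lambda>i::nat. i \<in> {5, 27, 29})"
  have "{i. x i} = {5, 27, 29}" unfolding x_def by auto
  then have xc: "x \<in> code 51 H_KR" unfolding code_def bvecs_def using sum3 by (auto simp: x_def)
  have yc: "bzero \<in> code 51 H_KR" unfolding code_def bvecs_def bzero_def using colsum0[of H_KR]
    by (simp add: bzero_def)
  have "x \<noteq> bzero" unfolding x_def bzero_def by (metis insertI1)
  moreover have "{i. x i \<noteq> bzero i} = {5, 27, 29}" unfolding x_def bzero_def by auto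
  then have "hamming_dist x bzero = 3" unfolding hamming_dist_def by simp
  ultimately have "3 = hamming_dist x bzero \<and> x \<in> code 51 H_KR \<and> bzero \<in> code 51 H_KR \<and> x \<noteq> bzero"
    using xc yc by simp
  then show "3 \<in> ?S" by blast
qed

theorem theorem5p2:
  shows "two_partition 10 51 H_KR P_KR \<and>
         min_distance 51 H_KR = 3 \<and>
         colsum H_KR {5, 27, 29} = bzero \<and>
         \<not> same_block P_KR 5 27 \<and> \<not> same_block P_KR 5 29 \<and> \<not> same_block P_KR 27 29"
  using two_part min_dist sum3 by (simp add: same_block_def P_KR_def)

end
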